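(* Let $n\ge 1$ and $N=2^n$. Let $H=\frac{1}{\sqrt2}\begin{bmatrix}1&1\\1&-1\end{bmatrix}$ be the Hadamard matrix and let $Z_{2N}$ be the $2N\times 2N$ cyclic downshift matrix, i.e. $Z_{2N}\ket{j}=\ket{(j+1)\bmod 2N}$ for $j=0,\dots,2N-1$. Define the block-diagonal unitary $$Z_{\rm block}=\sum_{k=0}^{N-1}\ket{k}\bra{k}\otimes Z_{2N}^{\,k}\in\mathbb{C}^{N\cdot 2N\times N\cdot 2N},$$ (first tensor factor: an $n$-qubit register indexed by $k\in\{0,\dots,N-1\}$; second factor: an $(n+1)$-qubit register indexed by $\{0,\dots,2N-1\}$), and $$U_L=(H^{\otimes n}\otimes I_{2N})\,Z_{\rm block}\,(H^{\otimes n}\otimes I_{2N}).$$ Let $L$ be the $N\times N$ lower triangular matrix with all entries on and below the diagonal equal to $1$ and all entries above the diagonal equal to $0$. Then for all $i,j\in\{0,\dots,N-1\}$, $$(\bra{0^n}\otimes\bra{i})\,U_L\,(\ket{0^n}\otimes\ket{j})=\frac{1}{N}L_{ij},$$ where $\ket{i},\ket{j}$ denote standard basis vectors of $\mathbb{C}^{2N}$ (so the indices $i,j<N$ correspond to the most significant qubit of the second register being $0$). In other words, $U_L$ is an $(N,\log_2 N+1,0)$-block encoding of $L$. *)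

theory Defs
  imports Complex_Main "Jordan_Normal_Form.Matrix"
begin

text \<open>Kronecker (tensor) product, big-endian: index (a,b) of A tensor B is a * dim B + b.\<close>
definition kron :: "complex mat \<Rightarrow> complex mat \<Rightarrow> complex mat" where
  "kron A B = mat (dim_row A * dim_row B) (dim_col A * dim_col B)
     (\<lambda>(i,j). A $$ (i div dim_row B, j div dim_col B) * B $$ (i mod dim_row B, j mod dim_col B))"

definition hadamard :: "complex mat" where
  "hadamard = mat 2 2 (\<lambda>(i,j). if i = 1 \<and> j = 1 then - 1 / complex_of_real (sqrt 2)
                                else 1 / complex_of_real (sqrt 2))"

fun hadamard_pow :: "nat \<Rightarrow> complex mat" where
  "hadamard_pow 0 = 1\<^sub>m 1"
| "hadamard_pow (Suc n) = kron hadamard (hadamard_pow n)"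

definition downshift :: "nat \<Rightarrow> complex mat" where
  "downshift M = mat M M (\<lambda>(i,j). if i = (j + 1) mod M then 1 else 0)"

definition ket :: "nat \<Rightarrow> nat \<Rightarrow> complex mat" where
  "ket d i = mat d 1 (\<lambda>(r,c). if r = i then 1 else 0)"

definition bra :: "nat \<Rightarrow> nat \<Rightarrow> complex mat" where
  "bra d i = transpose_mat (ket d i)"

fun zblock_partial :: "nat \<Rightarrow> nat \<Rightarrow> complex mat" where
  "zblock_partial N 0 = 0\<^sub>m (N * (2 * N)) (N * (2 * N))"
| "zblock_partial N (Suc k) =
     zblock_partial N k + kron (ket N k * bra N k) (downshift (2 * N) ^\<^sub>m k)"

definition zblock :: "nat \<Rightarrow> complex mat" where
  "zblock n = zblock_partial (2 ^ n) (2 ^ n)"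

definition U_L :: "nat \<Rightarrow> complex mat" where
  "U_L n = kron (hadamard_pow n) (1\<^sub>m (2 * 2 ^ n)) * zblock n
           * kron (hadamard_pow n) (1\<^sub>m (2 * 2 ^ n))"

definition lower_ones :: "nat \<Rightarrow> complex mat" where
  "lower_ones N = mat N N (\<lambda>(i,j). if j \<le> i then 1 else 0)"

end

theory Submission
  imports Defs
begin

lemma mult_entry:
  assumes "i < dim_row A" "j < dim_col B" "dim_col A = dim_row B"
  shows "(A * B) $$ (i,j) = (\<Sum>l<dim_row B. A $$ (i,l) * B $$ (l,j))"
  using assms by (auto simp: scalar_prod_def lessThan_atLeast0 intro!: sum.cong)

lemma sum_split_mult:
  "(\<Sum>a<p*q. f a) = (\<Sum>k<p. \<Sum>r<q. f (k*q+r :: nat))"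
proof (induction p)
  case 0 then show ?case by simp
next
  case (Suc p)
  have "{..<Suc p * q} = {..<p*q} \<union> {p*q..<p*q+q}" by auto
  then have "(\<Sum>a<Suc p*q. f a) = (\<Sum>a<p*q. f a) + (\<Sum>a\<in>{p*q..<p*q+q}. f a)"
    by (simp add: sum.union_disjoint ivl_disj_int)
  also have "(\<Sum>a\<in>{p*q..<p*q+q}. f a) = (\<Sum>r<q. f (p*q+r))"
  proof -
    have "(\<Sum>r<q. f (p*q+r)) = (\<Sum>r=0..<q. f (r+p*q))" by (simp add: lessThan_atLeast0 add.commute)
    also have "\<dots> = sum f {0+p*q..<q+p*q}" by (rule sum.shift_bounds_nat_ivl[symmetric])
    finally show ?thesis by (simp add: add.commute)
  qed
  finally show ?case using Suc by simp
qed

lemma dim_kron[simp]: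
  "dim_row (kron A B) = dim_row A * dim_row B" "dim_col (kron A B) = dim_col A * dim_col B"
  by (auto simp: kron_def)

lemma index_kron:
  "a < dim_row A * dim_row B \<Longrightarrow> b < dim_col A * dim_col B \<Longrightarrow>
   kron A B $$ (a,b) = A $$ (a div dim_row B, b div dim_col B) * B $$ (a mod dim_row B, b mod dim_col B)"
  by (simp add: kron_def)

lemma dim_hp[simp]: "dim_row (hadamard_pow n) = 2^n" "dim_col (hadamard_pow n) = 2^n"
  by (induction n) (auto simp: hadamard_def)

lemma hp_row0: "k < 2^n \<Longrightarrow> hadamard_pow n $$ (0,k) = (1 / complex_of_real (sqrt 2))^n"
proof (induction n arbitrary: k)
  case 0 then show ?case by simp
next
  case (Suc n)
  have "k div 2^n < 2" using Suc.prems by (simp add: less_mult_imp_div_less mult.commute)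
  then show ?case using Suc by (simp add: index_kron hadamard_def)
qed

lemma hp_col0: "k < 2^n \<Longrightarrow> hadamard_pow n $$ (k,0) = (1 / complex_of_real (sqrt 2))^n"
proof (induction n arbitrary: k)
  case 0 then show ?case by simp
next
  case (Suc n)
  have "k div 2^n < 2" using Suc.prems by (simp add: less_mult_imp_div_less mult.commute)
  then show ?case using Suc by (simp add: index_kron hadamard_def)
qed

lemma hp_prod: "k < 2^n \<Longrightarrow> hadamard_pow n $$ (0,k) * hadamard_pow n $$ (k,0) = 1 / of_nat (2^n)"
proof -
  assume "k < 2^n"
  then have "hadamard_pow n $$ (0,k) * hadamard_pow n $$ (k,0) = ((1 / complex_of_real (sqrt 2))^2)^n"
    by (simp add: hp_row0 hp_col0 power_mult_distrib[symmetric] power_mult[symmetric] mult.commute power2_eq_square)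
  also have "(1 / complex_of_real (sqrt 2))^2 = 1/2"
    by (simp add: power_divide of_real_power[symmetric])
  finally show ?thesis by (simp add: power_divide)
qed

lemma ds_carrier: "downshift M \<in> carrier_mat M M"
  by (simp add: downshift_def)

lemma ds_dim[simp]: "dim_row (downshift M) = M" "dim_col (downshift M) = M"
  by (simp_all add: downshift_def)

lemma dim_ket[simp]: "dim_row (ket d i) = d" "dim_col (ket d i) = 1"
  by (simp_all add: ket_def)

lemma dim_bra[simp]: "dim_row (bra d i) = 1" "dim_col (bra d i) = d"
  by (simp_all add: bra_def ket_def)

lemma dim_ketbra[simp]: "dim_row (ket N k * bra N k) = N" "dim_col (ket N k * bra N k) = N"
  by (simp_all add: ket_def bra_def)

lemma ds_pow: "0 < M \<Longrightarrow> i < M \<Longrightarrow> j < M \<Longrightarrow>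
  (downshift M ^\<^sub>m k) $$ (i,j) = (if i = (j + k) mod M then 1 else 0)"
proof (induction k arbitrary: j)
  case 0 then show ?case by (simp add: downshift_def)
next
  case (Suc k)
  have c: "downshift M ^\<^sub>m k \<in> carrier_mat M M" using ds_carrier by (rule pow_carrier_mat)
  have "(downshift M ^\<^sub>m Suc k) $$ (i,j) = (\<Sum>l<M. (downshift M ^\<^sub>m k) $$ (i,l) * downshift M $$ (l,j))"
    using mult_entry[of i "downshift M ^\<^sub>m k" j "downshift M"] Suc.prems by simp
  also have "\<dots> = (\<Sum>l<M. if l = (j+1) mod M then (downshift M ^\<^sub>m k) $$ (i,l) else 0)"
    using Suc.prems by (intro sum.cong) (auto simp: downshift_def)
  also have "\<dots> = (downshift M ^\<^sub>m k) $$ (i,(j+1) mod M)"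
    using Suc.prems by (simp add: sum.delta')
  also have "\<dots> = (if i = ((j+1) mod M + k) mod M then 1 else 0)"
    using Suc.prems by (intro Suc.IH) auto
  finally show ?case by (simp add: mod_add_left_eq)
qed

lemma ketbra: "p < N \<Longrightarrow> q < N \<Longrightarrow> (ket N k * bra N k) $$ (p,q) = (if p = k \<and> q = k then 1 else 0)"
  by (simp add: ket_def bra_def scalar_prod_def)

lemma zbp_dim: "zblock_partial N m \<in> carrier_mat (N*(2*N)) (N*(2*N))"
proof (induction m)
  case 0 then show ?case by simp
next
  case (Suc m)
  have "downshift (2*N) ^\<^sub>m m \<in> carrier_mat (2*N) (2*N)" using ds_carrier by (rule pow_carrier_mat)
  have "kron (ket N m * bra N m) (downshift (2 * N) ^\<^sub>m m) \<in> carrier_mat (N*(2*N)) (N*(2*N))"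
    unfolding carrier_mat_def using dim_kron[of "ket N m * bra N m" "downshift (2 * N) ^\<^sub>m m"]
    by (simp only: dim_ketbra pow_mat_dim ds_dim if_cancel mem_Collect_eq)
  then show ?case unfolding zblock_partial.simps by (rule add_carrier_mat)
qed

lemma zbp_entry:
  assumes "a < N*(2*N)" "b < N*(2*N)"
  shows "zblock_partial N m $$ (a,b) = (if a div (2*N) = b div (2*N) \<and> a div (2*N) < m
      then (downshift (2*N) ^\<^sub>m (a div (2*N))) $$ (a mod (2*N), b mod (2*N)) else 0)"
proof (induction m)
  case 0 then show ?case using assms by simp
next
  case (Suc m)
  have c: "downshift (2*N) ^\<^sub>m m \<in> carrier_mat (2*N) (2*N)" using ds_carrier by (rule pow_carrier_mat)
  have ad: "a div (2*N) < N" "b div (2*N) < N" using assms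
    by (simp_all add: less_mult_imp_div_less)
  have "zblock_partial N (Suc m) $$ (a,b) = zblock_partial N m $$ (a,b)
     + (ket N m * bra N m) $$ (a div (2*N), b div (2*N)) * (downshift (2*N) ^\<^sub>m m) $$ (a mod (2*N), b mod (2*N))"
    unfolding zblock_partial.simps
  proof (subst index_add_mat(1))
    show "a < dim_row (kron (ket N m * bra N m) (downshift (2 * N) ^\<^sub>m m))"
      "b < dim_col (kron (ket N m * bra N m) (downshift (2 * N) ^\<^sub>m m))"
      using assms by simp_all
    show "zblock_partial N m $$ (a, b) + kron (ket N m * bra N m) (downshift (2 * N) ^\<^sub>m m) $$ (a, b) =
      zblock_partial N m $$ (a, b) + (ket N m * bra N m) $$ (a div (2 * N), b div (2 * N)) *
      (downshift (2 * N) ^\<^sub>m m) $$ (a mod (2 * N), b mod (2 * N))"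
      using assms by (subst index_kron) simp_all
  qed
  also have "\<dots> = zblock_partial N m $$ (a,b)
     + (if a div (2*N) = m \<and> b div (2*N) = m then 1 else 0) * (downshift (2*N) ^\<^sub>m m) $$ (a mod (2*N), b mod (2*N))"
    using ad ketbra[of "a div (2*N)" N "b div (2*N)" m] by simp
  finally show ?case using Suc by auto
qed

lemma divmod_iff: "i < (M::nat) \<Longrightarrow> (c div M = 0 \<and> c mod M = i) = (c = i)"
  by (metis div_mult_mod_eq mult_zero_left add_0 div_less mod_less)

lemma bra_kron: "i < M \<Longrightarrow> kron (bra N 0) (bra M i) = bra (N*M) i"
proof (rule eq_matI)
  fix a c assume "i < M" "a < dim_row (bra (N*M) i)" "c < dim_col (bra (N*M) i)"
  then show "kron (bra N 0) (bra M i) $$ (a,c) = bra (N*M) i $$ (a,c)"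
    using divmod_iff[of i M c] by (auto simp: index_kron bra_def ket_def less_mult_imp_div_less)
qed (auto simp: bra_def ket_def)

lemma ket_kron: "j < M \<Longrightarrow> kron (ket N 0) (ket M j) = ket (N*M) j"
proof (rule eq_matI)
  fix a c assume "j < M" "a < dim_row (ket (N*M) j)" "c < dim_col (ket (N*M) j)"
  then show "kron (ket N 0) (ket M j) $$ (a,c) = ket (N*M) j $$ (a,c)"
    using divmod_iff[of j M a] by (auto simp: index_kron ket_def less_mult_imp_div_less)
qed (auto simp: ket_def)

lemma bra_A_ket:
  assumes "A \<in> carrier_mat D D" "i < D" "j < D"
  shows "(bra D i * A * ket D j) $$ (0,0) = A $$ (i,j)"
proof -
  have r: "(bra D i * A) $$ (0,c) = A $$ (i,c)" if "c < D" for c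
  proof -
    have "(bra D i * A) $$ (0,c) = (\<Sum>l<D. bra D i $$ (0,l) * A $$ (l,c))"
      using mult_entry[of 0 "bra D i" c A] assms that by simp
    also have "\<dots> = (\<Sum>l<D. if l = i then A $$ (l,c) else 0)"
      by (intro sum.cong) (auto simp: bra_def ket_def)
    finally show ?thesis using assms by simp
  qed
  have "(bra D i * A * ket D j) $$ (0,0) = (\<Sum>l<D. (bra D i * A) $$ (0,l) * ket D j $$ (l,0))"
    using mult_entry[of 0 "bra D i * A" 0 "ket D j"] assms by simp
  also have "\<dots> = (\<Sum>l<D. if l = j then A $$ (i,l) else 0)"
    using r by (intro sum.cong) (auto simp: ket_def)
  finally show ?thesis using assms by simp
qed

lemma lt_mul: "k < (N::nat) \<Longrightarrow> r < M \<Longrightarrow> k*M+r < N*M"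
proof -
  assume a: "k < N" "r < M"
  have "(k+1)*M \<le> N*M" using a by (intro mult_right_mono) auto
  then show ?thesis using a by simp
qed

lemma UL_entry:
  fixes n i j :: nat
  assumes "i < 2 ^ n" and "j < 2 ^ n"
  shows "U_L n $$ (i,j) = (1 / of_nat (2 ^ n)) * (if j \<le> i then 1 else 0)"
proof -
  define N :: nat where "N = 2^n"
  define M where "M = 2*N"
  define K where "K = kron (hadamard_pow n) (1\<^sub>m M)"
  define Zb where "Zb = zblock_partial N N"
  define H where "H = hadamard_pow n"
  have Mpos: "0 < M" "0 < N" by (auto simp: M_def N_def)
  have iM: "i < M" "j < M" "i < N" "j < N" using assms by (auto simp: M_def N_def)
  have UL: "U_L n = K * Zb * K" by (simp add: U_L_def K_def Zb_def zblock_def M_def N_def)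
  have dK: "dim_row K = N*M" "dim_col K = N*M" by (simp_all add: K_def N_def)
  have dZ: "Zb \<in> carrier_mat (N*M) (N*M)" unfolding Zb_def M_def by (rule zbp_dim)
  have dm: "(k*M+r) div M = k" "(k*M+r) mod M = r" if "r < M" for k r
    using that by simp_all
  have Kent: "K $$ (c,d) = H $$ (c div M, d div M) * (if c mod M = d mod M then 1 else 0)"
    if "c < N*M" "d < N*M" for c d
    using that Mpos by (simp add: K_def H_def index_kron N_def)
  have Zent: "Zb $$ (k*M+r, k'*M+r') = (if k = k' then (downshift M ^\<^sub>m k) $$ (r, r') else 0)"
    if "k < N" "r < M" "k' < N" "r' < M" for k r k' r'
    using that lt_mul[of k N r M] lt_mul[of k' N r' M]
    by (simp add: Zb_def zbp_entry M_def[symmetric] dm)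
  have KZ: "(K*Zb) $$ (i, k'*M+j) = H $$ (0,k') * (downshift M ^\<^sub>m k') $$ (i, j)" if "k' < N" for k'
  proof -
    have dZ': "dim_row Zb = N*M" "dim_col Zb = N*M" using dZ by auto
    have a: "i < N*M" "k'*M+j < N*M" using lt_mul[of k' N j M] lt_mul[of 0 N i M] iM that by auto
    have "(K*Zb) $$ (i, k'*M+j) = (\<Sum>a<dim_row Zb. K $$ (i,a) * Zb $$ (a, k'*M+j))"
      by (rule mult_entry) (use a dK dZ' in simp_all)
    then have "(K*Zb) $$ (i, k'*M+j) = (\<Sum>a<N*M. K $$ (i,a) * Zb $$ (a, k'*M+j))"
      by (simp only: dZ')
    also have "\<dots> = (\<Sum>k<N. \<Sum>r<M. K $$ (i,k*M+r) * Zb $$ (k*M+r, k'*M+j))"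
      by (rule sum_split_mult)
    also have "\<dots> = (\<Sum>k<N. \<Sum>r<M. if r = i then (if k = k' then H $$ (0,k) * (downshift M ^\<^sub>m k) $$ (i, j) else 0) else 0)"
    proof (intro sum.cong refl)
      fix k r assume kr: "k \<in> {..<N}" "r \<in> {..<M}"
      have b: "i < N*M" "k*M+r < N*M" using lt_mul[of k N r M] lt_mul[of 0 N i M] iM kr by auto
      have "K $$ (i,k*M+r) = H $$ (0,k) * (if i = r then 1 else 0)"
        using Kent[OF b] iM kr dm[of r k] by simp
      moreover have "Zb $$ (k*M+r, k'*M+j) = (if k = k' then (downshift M ^\<^sub>m k) $$ (r, j) else 0)"
        using Zent[of k r k' j] kr that iM by simp
      ultimately show "K $$ (i,k*M+r) * Zb $$ (k*M+r, k'*M+j) =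
        (if r = i then (if k = k' then H $$ (0,k) * (downshift M ^\<^sub>m k) $$ (i, j) else 0) else 0)"
        by auto
    qed
    also have "\<dots> = H $$ (0,k') * (downshift M ^\<^sub>m k') $$ (i, j)"
      using iM that by (simp add: sum.delta')
    finally show ?thesis .
  qed
  have "U_L n $$ (i,j) = (\<Sum>b<N*M. (K*Zb) $$ (i,b) * K $$ (b,j))"
  proof -
    have a: "i < N*M" "j < N*M" using lt_mul[of 0 N j M] lt_mul[of 0 N i M] iM by auto
    have "(K*Zb*K) $$ (i,j) = (\<Sum>b<dim_row K. (K*Zb) $$ (i,b) * K $$ (b,j))"
      by (rule mult_entry) (use a dK dZ in auto)
    then show ?thesis unfolding UL by (simp only: dK)
  qed
  also have "\<dots> = (\<Sum>k<N. \<Sum>r<M. (K*Zb) $$ (i,k*M+r) * K $$ (k*M+r,j))"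
    by (rule sum_split_mult)
  also have "\<dots> = (\<Sum>k<N. \<Sum>r<M. if r = j then (K*Zb) $$ (i,k*M+j) * H $$ (k,0) else 0)"
  proof (intro sum.cong refl)
    fix k r assume kr: "k \<in> {..<N}" "r \<in> {..<M}"
    have b: "k*M+r < N*M" "j < N*M" using lt_mul[of k N r M] lt_mul[of 0 N j M] iM kr by auto
    have "K $$ (k*M+r,j) = H $$ (k,0) * (if r = j then 1 else 0)"
      using Kent[OF b] iM kr dm[of r k] by simp
    then show "(K*Zb) $$ (i,k*M+r) * K $$ (k*M+r,j) = (if r = j then (K*Zb) $$ (i,k*M+j) * H $$ (k,0) else 0)"
      by auto
  qed
  also have "\<dots> = (\<Sum>k<N. H $$ (0,k) * H $$ (k,0) * (downshift M ^\<^sub>m k) $$ (i, j))"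
    using iM by (simp add: sum.delta' KZ mult_ac)
  also have "\<dots> = (\<Sum>k<N. if k = i - j then (if j \<le> i then 1 / of_nat N else 0) else 0)"
  proof (intro sum.cong refl)
    fix k assume k: "k \<in> {..<N}"
    have "(j+k) mod M = j+k" using k iM by (simp add: M_def)
    then show "H $$ (0,k) * H $$ (k,0) * (downshift M ^\<^sub>m k) $$ (i, j)
       = (if k = i - j then (if j \<le> i then 1 / of_nat N else 0) else 0)"
      using k iM Mpos hp_prod[of k n] by (auto simp: H_def N_def ds_pow)
  qed
  also have "\<dots> = (1 / of_nat N) * (if j \<le> i then 1 else 0)"
    using iM by (auto simp add: sum.delta')
  finally show ?thesis by (simp add: N_def)
qed

theorem theorem9:
  fixes n i j :: nat
  assumes "n \<ge> 1" and "i < 2 ^ n" and "j < 2 ^ n"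
  shows "(kron (bra (2 ^ n) 0) (bra (2 * 2 ^ n) i) * U_L n
            * kron (ket (2 ^ n) 0) (ket (2 * 2 ^ n) j)) $$ (0, 0)
         = (1 / of_nat (2 ^ n)) * lower_ones (2 ^ n) $$ (i, j)"
proof -
  have c: "U_L n \<in> carrier_mat (2^n * (2*2^n)) (2^n * (2*2^n))"
    unfolding carrier_mat_def U_L_def by simp
  have i2: "i < 2*2^n" and j2: "j < 2*2^n" using assms by simp_all
  have l1: "0 * (2*2^n) + i < 2^n * (2*2^n)" by (rule lt_mul) (use i2 in simp_all)
  have l2: "0 * (2*2^n) + j < 2^n * (2*2^n)" by (rule lt_mul) (use j2 in simp_all)
  have l: "i < 2^n * (2*2^n)" "j < 2^n * (2*2^n)" using l1 l2 by (simp_all only: mult_zero_left add_0)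
  have "(kron (bra (2 ^ n) 0) (bra (2 * 2 ^ n) i) * U_L n
            * kron (ket (2 ^ n) 0) (ket (2 * 2 ^ n) j)) $$ (0, 0) = U_L n $$ (i,j)"
    unfolding bra_kron[OF i2] ket_kron[OF j2] by (rule bra_A_ket[OF c l])
  also have "\<dots> = (1 / of_nat (2 ^ n)) * lower_ones (2 ^ n) $$ (i, j)"
    unfolding UL_entry[OF assms(2,3)] lower_ones_def using assms(2,3) by simp
  finally show ?thesis .
qed

end
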